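(* Let $2\le m<n$, let $g_1,\dots,g_m:\mathbb{R}^n\to\mathbb{R}$ be smooth maps and $c_1,\dots,c_m\in\mathbb{R}$; let $Y=\{p: g_i(p)=c_i,\ 1\le i\le m-1\}$ and $X=\{p\in Y: g_m(p)=c_m\}$. Assume $Y$ is nonempty, bounded and connected, $\nabla g_1(p),\dots,\nabla g_{m-1}(p)$ are linearly independent at every $p\in Y$, and $g_m|_Y$ is a Morse function on $Y$. If $c_m$ equals the global maximum or the global minimum of $g_m|_Y$, then the social choice problem over $X$ has a solution.
   Context: A smooth function on a manifold is a Morse function if its Hessian (in local coordinates) is nonsingular at each of its critical points. For $X\subseteq\mathbb{R}^n$ and $k\ge 2$, a social choice function for $k$ agents over $X$ is a continuous map $F:X^k\to X$ which is anonymous (invariant under permutations of the arguments) and unanimous ($F(p,\dots,p)=p$). "The social choice problem over $X$ has a solution" means that an SCF for $k$ agents over $X$ exists for every $k\ge 2$. *)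

theory Defs
  imports "HOL-Analysis.Analysis"
begin

definition partial :: "(real^'a::finite \<Rightarrow> real) \<Rightarrow> 'a \<Rightarrow> real^'a \<Rightarrow> real" where
  "partial f i x = frechet_derivative f (at x) (axis i 1)"

definition grad :: "(real^'a::finite \<Rightarrow> real) \<Rightarrow> real^'a \<Rightarrow> real^'a" where
  "grad f x = (\<chi> j. partial f j x)"

text \<open>C-infinity on an open set U: differentiable on U and all partial derivatives are again
  C-infinity on U (greatest fixed point = all iterated partial derivatives exist).\<close>
coinductive smooth_on :: "(real^'a::finite) set \<Rightarrow> (real^'a \<Rightarrow> real) \<Rightarrow> bool" for U where
  "(\<forall>x\<in>U. f differentiable (at x)) \<Longrightarrow> (\<forall>i. smooth_on U (\<lambda>x. partial f i x)) \<Longrightarrow> smooth_on U f"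

text \<open>A local parametrization (inverse of a chart / local coordinates) of a subset Y of R^n.\<close>
definition local_param :: "(real^'k::finite \<Rightarrow> real^'n::finite) \<Rightarrow> (real^'k) set \<Rightarrow> (real^'n) set \<Rightarrow> bool" where
  "local_param \<phi> U Y \<longleftrightarrow> open U \<and> (\<forall>j. smooth_on U (\<lambda>u. \<phi> u $ j)) \<and> \<phi> ` U \<subseteq> Y
     \<and> openin (top_of_set Y) (\<phi> ` U) \<and> (\<exists>\<psi>. homeomorphism U (\<phi> ` U) \<phi> \<psi>)
     \<and> (\<forall>u\<in>U. inj (frechet_derivative \<phi> (at u)))"

text \<open>f restricted to Y is a Morse function on Y (Y of dimension CARD('k)): in every local
  coordinate system, at every critical point the Hessian is nonsingular.\<close>
definition morse_on :: "'k::finite itself \<Rightarrow> (real^'n::finite) set \<Rightarrow> (real^'n \<Rightarrow> real) \<Rightarrow> bool" where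
  "morse_on _ Y f \<longleftrightarrow>
     (\<forall>(\<phi>::real^'k \<Rightarrow> real^'n) U u. local_param \<phi> U Y \<and> u \<in> U
        \<and> frechet_derivative (f \<circ> \<phi>) (at u) = (\<lambda>_. 0)
        \<longrightarrow> det (\<chi> i j. partial (\<lambda>v. partial (f \<circ> \<phi>) j v) i u) \<noteq> 0)"

text \<open>Social choice function for k agents over X; profiles in X^k are functions on {..<k}.\<close>
definition social_choice_fun :: "(real^'n::finite) set \<Rightarrow> nat \<Rightarrow> ((nat \<Rightarrow> real^'n) \<Rightarrow> real^'n) \<Rightarrow> bool" where
  "social_choice_fun X k F \<longleftrightarrow>
     continuous_map (subtopology (product_topology (\<lambda>_. euclidean) {..<k}) (PiE {..<k} (\<lambda>_. X)))
                    (top_of_set X) F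
   \<and> (\<forall>x\<in>PiE {..<k} (\<lambda>_. X). \<forall>\<sigma>. \<sigma> permutes {..<k} \<longrightarrow> F (x \<circ> \<sigma>) = F x)
   \<and> (\<forall>p\<in>X. F (\<lambda>i\<in>{..<k}. p) = p)"

definition scf_problem_solvable :: "(real^'n::finite) set \<Rightarrow> bool" where
  "scf_problem_solvable X \<longleftrightarrow> (\<forall>k\<ge>2. \<exists>F. social_choice_fun X k F)"

end

theory Submission
  imports Defs
begin


lemma partial_at: "(f has_derivative f') (at x) \<Longrightarrow> partial f i x = f' (axis i 1)"
  unfolding partial_def using frechet_derivative_at by metis

lemma smooth_on_diff: "smooth_on U f \<Longrightarrow> x \<in> U \<Longrightarrow> f differentiable (at x)"
  by (erule smooth_on.cases) auto

lemma smooth_on_partial: "smooth_on U f \<Longrightarrow> smooth_on U (partial f i)"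
  by (erule smooth_on.cases) auto

lemma linear_expand:
  fixes f' :: "real^'a \<Rightarrow> real"
  assumes "linear f'"
  shows "f' v = (\<Sum>i\<in>UNIV. v$i * f' (axis i 1))"
proof -
  have "f' v = f' (\<Sum>i\<in>UNIV. v$i *s axis i 1)" by (simp add: basis_expansion)
  also have "\<dots> = (\<Sum>i\<in>UNIV. v$i * f' (axis i 1))"
    using assms by (simp add: linear_sum linear_scale scalar_mult_eq_scaleR)
  finally show ?thesis .
qed

lemma smooth_on_const: "smooth_on U (\<lambda>x. c)"
proof -
  have "\<exists>c. f = (\<lambda>x. c) \<Longrightarrow> smooth_on U f" for f
  proof (coinduction arbitrary: f rule: smooth_on.coinduct)
    case (smooth_on f)
    then obtain c where f: "f = (\<lambda>x. c)" by auto
    have "partial f i = (\<lambda>x. 0)" for i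
      unfolding f by (rule ext, rule partial_at[OF has_derivative_const, simplified])
    then show ?case using f by auto
  qed
  then show ?thesis by auto
qed

lemma smooth_on_mono: "smooth_on U f \<Longrightarrow> V \<subseteq> U \<Longrightarrow> smooth_on V f"
proof (coinduction arbitrary: f rule: smooth_on.coinduct)
  case (smooth_on f)
  then show ?case by (auto elim: smooth_on.cases)
qed

inductive gen :: "(real^'a::finite) set \<Rightarrow> (real^'a \<Rightarrow> real) set \<Rightarrow> (real^'a \<Rightarrow> real) \<Rightarrow> bool"
  for V G where
  gen_smooth: "smooth_on V f \<Longrightarrow> gen V G f"
| gen_G: "f \<in> G \<Longrightarrow> gen V G f"
| gen_add: "gen V G a \<Longrightarrow> gen V G b \<Longrightarrow> gen V G (\<lambda>x. a x + b x)"
| gen_mult: "gen V G a \<Longrightarrow> gen V G b \<Longrightarrow> gen V G (\<lambda>x. a x * b x)"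
| gen_cong: "gen V G a \<Longrightarrow> (\<forall>x\<in>V. a x = b x) \<Longrightarrow> gen V G b"

lemma gen_const: "gen V G (\<lambda>x. c)" by (rule gen_smooth, rule smooth_on_const)

lemma gen_sum: "finite I \<Longrightarrow> (\<And>j. j \<in> I \<Longrightarrow> gen V G (f j)) \<Longrightarrow> gen V G (\<lambda>x. \<Sum>j\<in>I. f j x)"
proof (induction I rule: finite_induct)
  case empty then show ?case using gen_const[of V G 0] by simp
next
  case (insert j I)
  then show ?case using gen_add[of V G "f j" "\<lambda>x. \<Sum>j\<in>I. f j x"] by simp
qed

lemma gen_step:
  assumes "open V"
    and Gd: "\<And>g x. g \<in> G \<Longrightarrow> x \<in> V \<Longrightarrow> g differentiable (at x)"
    and Gp: "\<And>g i. g \<in> G \<Longrightarrow> gen V G (partial g i)"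
    and "gen V G f"
  shows "(\<forall>x\<in>V. f differentiable (at x)) \<and> (\<forall>i. gen V G (partial f i))"
  using assms(4)
proof induction
  case (gen_smooth f)
  then show ?case by (auto intro: smooth_on_diff gen.gen_smooth smooth_on_partial)
next
  case (gen_G f)
  then show ?case using Gd Gp by auto
next
  case (gen_add a b)
  have "gen V G (partial (\<lambda>x. a x + b x) i)" for i
  proof (rule gen_cong)
    show "gen V G (\<lambda>x. partial a i x + partial b i x)" using gen_add.IH by (intro gen.gen_add) blast+
    show "\<forall>x\<in>V. partial a i x + partial b i x = partial (\<lambda>x. a x + b x) i x"
    proof
      fix x assume "x \<in> V"
      then have "(a has_derivative frechet_derivative a (at x)) (at x)"
        "(b has_derivative frechet_derivative b (at x)) (at x)"
        using gen_add.IH frechet_derivative_works by blast+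
      from partial_at[OF has_derivative_add[OF this]] show "partial a i x + partial b i x = partial (\<lambda>x. a x + b x) i x"
        by (simp add: partial_def)
    qed
  qed
  then show ?case using gen_add.IH by (blast intro: differentiable_add)
next
  case (gen_mult a b)
  have "gen V G (partial (\<lambda>x. a x * b x) i)" for i
  proof (rule gen_cong)
    show "gen V G (\<lambda>x. a x * partial b i x + partial a i x * b x)"
      using gen_mult.IH gen_mult.hyps by (intro gen.gen_add gen.gen_mult) blast+
    show "\<forall>x\<in>V. a x * partial b i x + partial a i x * b x = partial (\<lambda>x. a x * b x) i x"
    proof
      fix x assume "x \<in> V"
      then have "(a has_derivative frechet_derivative a (at x)) (at x)"
        "(b has_derivative frechet_derivative b (at x)) (at x)"
        using gen_mult.IH frechet_derivative_works by blast+
      from partial_at[OF has_derivative_mult[OF this]] show "a x * partial b i x + partial a i x * b x = partial (\<lambda>x. a x * b x) i x"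
        by (simp add: partial_def)
    qed
  qed
  then show ?case using gen_mult.IH by (blast intro: differentiable_mult)
next
  case (gen_cong a b)
  have d: "\<forall>x\<in>V. b differentiable (at x)"
  proof
    fix x assume "x \<in> V"
    then obtain f' where "(a has_derivative f') (at x)" using gen_cong.IH unfolding differentiable_def by blast
    then have "(b has_derivative f') (at x)"
      using has_derivative_transform_within_open[OF _ \<open>open V\<close> \<open>x\<in>V\<close>] gen_cong.hyps(2) by blast
    then show "b differentiable (at x)" unfolding differentiable_def by blast
  qed
  have "gen V G (partial b i)" for i
  proof (rule gen.gen_cong)
    show "gen V G (partial a i)" using gen_cong.IH by blast
    show "\<forall>x\<in>V. partial a i x = partial b i x"
    proof
      fix x assume "x \<in> V"
      then have "(a has_derivative frechet_derivative a (at x)) (at x)"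
        using gen_cong.IH frechet_derivative_works by blast
      then have "(b has_derivative frechet_derivative a (at x)) (at x)"
        using has_derivative_transform_within_open[OF _ \<open>open V\<close> \<open>x\<in>V\<close>] gen_cong.hyps(2) by blast
      from partial_at[OF this] show "partial a i x = partial b i x" by (simp add: partial_def)
    qed
  qed
  then show ?case using d by auto
qed

lemma gen_smooth_on:
  assumes "open V"
    and Gd: "\<And>g x. g \<in> G \<Longrightarrow> x \<in> V \<Longrightarrow> g differentiable (at x)"
    and Gp: "\<And>g i. g \<in> G \<Longrightarrow> gen V G (partial g i)"
    and "gen V G f"
  shows "smooth_on V f"
  using assms(4)
proof (coinduction arbitrary: f rule: smooth_on.coinduct)
  case (smooth_on f)
  then show ?case using gen_step[OF assms(1-3)] by blast
qed

lemma smooth_gen0: "open V \<Longrightarrow> gen V {} f \<Longrightarrow> smooth_on V f"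
  by (rule gen_smooth_on) auto

lemma smooth_add: "open V \<Longrightarrow> smooth_on V a \<Longrightarrow> smooth_on V b \<Longrightarrow> smooth_on V (\<lambda>x. a x + b x)"
  by (erule smooth_gen0, rule gen_add; erule gen_smooth)
lemma smooth_mult: "open V \<Longrightarrow> smooth_on V a \<Longrightarrow> smooth_on V b \<Longrightarrow> smooth_on V (\<lambda>x. a x * b x)"
  by (erule smooth_gen0, rule gen_mult; erule gen_smooth)
lemma smooth_cong: "open V \<Longrightarrow> smooth_on V a \<Longrightarrow> (\<forall>x\<in>V. a x = b x) \<Longrightarrow> smooth_on V b"
  by (erule smooth_gen0, erule gen_cong[OF gen_smooth])
lemma smooth_sum: "open V \<Longrightarrow> finite I \<Longrightarrow> (\<And>j. j \<in> I \<Longrightarrow> smooth_on V (f j)) \<Longrightarrow> smooth_on V (\<lambda>x. \<Sum>j\<in>I. f j x)"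
  by (erule smooth_gen0, rule gen_sum; simp add: gen_smooth)
lemma smooth_prod: assumes "open V" "finite I" "(\<And>j. j \<in> I \<Longrightarrow> smooth_on V (f j))" shows "smooth_on V (\<lambda>x. \<Prod>j\<in>I. f j x)"
  using assms(2,3)
proof (induction I rule: finite_induct)
  case empty then show ?case using smooth_on_const[of V 1] by simp
next
  case (insert j I)
  then show ?case using smooth_mult[OF assms(1), of "f j" "\<lambda>x. \<Prod>j\<in>I. f j x"] by simp
qed
lemma smooth_neg: "open V \<Longrightarrow> smooth_on V a \<Longrightarrow> smooth_on V (\<lambda>x. - a x)"
  using smooth_mult[OF _ smooth_on_const[of V "-1"], of a] by simp
lemma smooth_diff: "open V \<Longrightarrow> smooth_on V a \<Longrightarrow> smooth_on V b \<Longrightarrow> smooth_on V (\<lambda>x. a x - b x)"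
  using smooth_add[OF _ _ smooth_neg, of V a b] by simp



lemma vec_has_derivative:
  fixes f :: "'c::real_normed_vector \<Rightarrow> real^'b"
  assumes "\<And>j. ((\<lambda>x. f x $ j) has_derivative D j) (at x)"
  shows "(f has_derivative (\<lambda>v. \<chi> j. D j v)) (at x)"
proof -
  have "\<forall>i\<in>Basis. ((\<lambda>x. f x \<bullet> i) has_derivative (\<lambda>v. (\<chi> j. D j v) \<bullet> i)) (at x)"
  proof
    fix i :: "real^'b" assume "i \<in> Basis"
    then obtain j where i: "i = axis j 1" by (auto simp: Basis_vec_def)
    show "((\<lambda>x. f x \<bullet> i) has_derivative (\<lambda>v. (\<chi> j. D j v) \<bullet> i)) (at x)"
      using assms[of j] unfolding i by (simp flip: cart_eq_inner_axis)
  qed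
  then show ?thesis using has_derivative_componentwise_within by blast
qed

lemma vec_differentiable:
  fixes f :: "'c::real_normed_vector \<Rightarrow> real^'b"
  assumes "\<And>j. (\<lambda>x. f x $ j) differentiable (at x)"
  shows "f differentiable (at x)"
proof -
  have "\<forall>j. \<exists>D. ((\<lambda>x. f x $ j) has_derivative D) (at x)" using assms unfolding differentiable_def by blast
  then obtain D where "\<And>j. ((\<lambda>x. f x $ j) has_derivative D j) (at x)" by metis
  from vec_has_derivative[OF this] show ?thesis unfolding differentiable_def by blast
qed

lemma nth_has_derivative:
  "(f has_derivative f') F \<Longrightarrow> ((\<lambda>x. f x $ j) has_derivative (\<lambda>v. f' v $ j)) F"
  by (rule bounded_linear.has_derivative[OF bounded_linear_vec_nth])

lemma partial_chain:
  fixes \<Psi> :: "real^'a \<Rightarrow> real^'b" and F :: "real^'b \<Rightarrow> real"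
  assumes "\<Psi> differentiable (at x)" "F differentiable (at (\<Psi> x))"
  shows "partial (\<lambda>x. F (\<Psi> x)) i x = (\<Sum>j\<in>UNIV. partial (\<lambda>y. \<Psi> y $ j) i x * partial F j (\<Psi> x))"
proof -
  obtain D where D: "(\<Psi> has_derivative D) (at x)" using assms(1) unfolding differentiable_def by blast
  obtain DF where DF: "(F has_derivative DF) (at (\<Psi> x))" using assms(2) unfolding differentiable_def by blast
  have "partial (\<lambda>x. F (\<Psi> x)) i x = DF (D (axis i 1))"
    using partial_at[OF has_derivative_compose[OF D DF]] .
  also have "\<dots> = (\<Sum>j\<in>UNIV. D (axis i 1) $ j * DF (axis j 1))"
    by (rule linear_expand[OF has_derivative_linear[OF DF]])
  also have "\<dots> = (\<Sum>j\<in>UNIV. partial (\<lambda>y. \<Psi> y $ j) i x * partial F j (\<Psi> x))"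
    using partial_at[OF nth_has_derivative[OF D]] partial_at[OF DF] by simp
  finally show ?thesis .
qed

lemma smooth_comp_gen:
  fixes \<Psi> :: "real^'a \<Rightarrow> real^'b" and F :: "real^'b \<Rightarrow> real"
  assumes V: "open V" and W: "open W" and dP: "\<And>x. x\<in>V \<Longrightarrow> \<Psi> differentiable (at x)" and PVW: "\<Psi> ` V \<subseteq> W"
    and hp: "\<And>i j. gen V {(\<lambda>x. F (\<Psi> x)) | F. smooth_on W F} (partial (\<lambda>y. \<Psi> y $ j) i)"
    and F: "smooth_on W F"
  shows "smooth_on V (\<lambda>x. F (\<Psi> x))"
proof (rule gen_smooth_on[OF V])
  let ?G = "{(\<lambda>x. F (\<Psi> x)) | F. smooth_on W F}"
  show "gen V ?G (\<lambda>x. F (\<Psi> x))" using F by (intro gen_G) blast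
  show "g differentiable (at x)" if gG: "g \<in> ?G" and xV: "x \<in> V" for g x
  proof -
    obtain H where g: "g = (\<lambda>x. H (\<Psi> x))" and H: "smooth_on W H" using gG by blast
    have "H differentiable (at (\<Psi> x))" using smooth_on_diff[OF H] PVW xV by blast
    from differentiable_chain_at[OF dP[OF \<open>x\<in>V\<close>] this] show ?thesis by (simp add: g o_def)
  qed
  show "gen V ?G (partial g i)" if gG: "g \<in> ?G" for g i
  proof -
    obtain H where g: "g = (\<lambda>x. H (\<Psi> x))" and H: "smooth_on W H" using gG by blast
    show ?thesis
    proof (rule gen_cong)
      show "gen V ?G (\<lambda>x. \<Sum>j\<in>UNIV. partial (\<lambda>y. \<Psi> y $ j) i x * partial H j (\<Psi> x))"
      proof (rule gen_sum)
        fix j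
        have "gen V ?G (\<lambda>x. partial H j (\<Psi> x))"
          using smooth_on_partial[OF H] by (intro gen_G) blast
        then show "gen V ?G (\<lambda>x. partial (\<lambda>y. \<Psi> y $ j) i x * partial H j (\<Psi> x))"
          using hp by (intro gen_mult)
      qed simp
      show "\<forall>x\<in>V. (\<Sum>j\<in>UNIV. partial (\<lambda>y. \<Psi> y $ j) i x * partial H j (\<Psi> x)) = partial g i x"
      proof
        fix x assume "x \<in> V"
        have "H differentiable (at (\<Psi> x))" using smooth_on_diff[OF H] PVW \<open>x\<in>V\<close> by blast
        from partial_chain[OF dP[OF \<open>x\<in>V\<close>] this] show "(\<Sum>j\<in>UNIV. partial (\<lambda>y. \<Psi> y $ j) i x * partial H j (\<Psi> x)) = partial g i x"
          by (simp add: g)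
      qed
    qed
  qed
qed

lemma smooth_comp:
  fixes \<Psi> :: "real^'a \<Rightarrow> real^'b" and F :: "real^'b \<Rightarrow> real"
  assumes V: "open V" and W: "open W" and sP: "\<And>j. smooth_on V (\<lambda>x. \<Psi> x $ j)" and PVW: "\<Psi> ` V \<subseteq> W"
    and F: "smooth_on W F"
  shows "smooth_on V (\<lambda>x. F (\<Psi> x))"
proof (rule smooth_comp_gen[OF V W _ PVW _ F])
  show "\<Psi> differentiable (at x)" if "x \<in> V" for x
    using smooth_on_diff[OF sP that] by (rule vec_differentiable)
  show "gen V {(\<lambda>x. F (\<Psi> x)) | F. smooth_on W F} (partial (\<lambda>y. \<Psi> y $ j) i)" for i j
    using smooth_on_partial[OF sP] by (rule gen_smooth)
qed

lemma smooth_inverse_fun: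
  assumes W: "open W" and d: "smooth_on W d" and nz: "\<And>x. x \<in> W \<Longrightarrow> d x \<noteq> 0"
  shows "smooth_on W (\<lambda>x. inverse (d x))"
proof (rule gen_smooth_on[OF W, of "{\<lambda>x. inverse (d x)}"])
  show "gen W {\<lambda>x. inverse (d x)} (\<lambda>x. inverse (d x))" by (rule gen_G) simp
  show "g differentiable (at x)" if "g \<in> {\<lambda>x. inverse (d x)}" "x \<in> W" for g x
  proof -
    obtain D where "(d has_derivative D) (at x)" using smooth_on_diff[OF d \<open>x\<in>W\<close>] unfolding differentiable_def by blast
    from Deriv.has_derivative_inverse[OF nz[OF \<open>x\<in>W\<close>] this] show ?thesis using that unfolding differentiable_def by blast
  qed
  show "gen W {\<lambda>x. inverse (d x)} (partial g i)" if "g \<in> {\<lambda>x. inverse (d x)}" for g i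
  proof -
    let ?G = "{\<lambda>x. inverse (d x)}"
    have g: "g = (\<lambda>x. inverse (d x))" using that by simp
    show ?thesis
    proof (rule gen_cong)
      have I: "gen W ?G (\<lambda>x. inverse (d x))" by (rule gen_G) simp
      have "gen W ?G (\<lambda>x. (- 1) * ((inverse (d x) * partial d i x) * inverse (d x)))"
        by (intro gen_mult gen_const I gen_smooth smooth_on_partial[OF d])
      then show "gen W ?G (\<lambda>x. - (inverse (d x) * partial d i x * inverse (d x)))" by simp
      show "\<forall>x\<in>W. - (inverse (d x) * partial d i x * inverse (d x)) = partial g i x"
      proof
        fix x assume "x \<in> W"
        obtain D where D: "(d has_derivative D) (at x)" using smooth_on_diff[OF d \<open>x\<in>W\<close>] unfolding differentiable_def by blast
        show "- (inverse (d x) * partial d i x * inverse (d x)) = partial g i x"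
          unfolding g partial_at[OF Deriv.has_derivative_inverse[OF nz[OF \<open>x\<in>W\<close>] D]] partial_at[OF D] ..
      qed
    qed
  qed
qed

lemma smooth_det:
  fixes A :: "real^'a \<Rightarrow> real^'n^'n"
  assumes V: "open V" and sA: "\<And>r c. smooth_on V (\<lambda>x. A x $ r $ c)"
  shows "smooth_on V (\<lambda>x. det (A x))"
  unfolding det_def
  by (intro smooth_sum[OF V] smooth_mult[OF V] smooth_on_const smooth_prod[OF V] sA finite_permutations) simp_all



lemma smooth_linear:
  fixes f :: "real^'a \<Rightarrow> real"
  assumes "bounded_linear f"
  shows "smooth_on V f"
proof (rule smooth_on.intros)
  have D: "(f has_derivative f) (at x)" for x using assms by (rule bounded_linear_imp_has_derivative)
  then show "\<forall>x\<in>V. f differentiable (at x)" unfolding differentiable_def by blast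
  have "partial f i = (\<lambda>x. f (axis i 1))" for i using partial_at[OF D] by auto
  then show "\<forall>i. smooth_on V (partial f i)" by (simp add: smooth_on_const)
qed

lemma smooth_coord: "smooth_on V (\<lambda>x::real^'a. x $ k)"
  by (rule smooth_linear, rule bounded_linear_vec_nth)

definition jac :: "(real^'n::finite \<Rightarrow> real^'n) \<Rightarrow> real^'n \<Rightarrow> real^'n^'n" where
  "jac \<Phi> x = (\<chi> r c. partial (\<lambda>y. \<Phi> y $ r) c x)"

lemma deriv_jac:
  assumes D: "(\<Phi> has_derivative D) (at x)"
  shows "D v = jac \<Phi> x *v v"
proof -
  have "D v $ r = (jac \<Phi> x *v v) $ r" for r
  proof -
    have "D v $ r = (\<Sum>c\<in>UNIV. v$c * D (axis c 1) $ r)"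
      using linear_expand[OF has_derivative_linear[OF nth_has_derivative[OF D]], of v] by simp
    also have "\<dots> = (\<Sum>c\<in>UNIV. jac \<Phi> x $ r $ c * v $ c)"
      using partial_at[OF nth_has_derivative[OF D]] by (simp add: jac_def mult.commute)
    finally show ?thesis by (simp add: matrix_vector_mult_def)
  qed
  then show ?thesis by (simp add: vec_eq_iff)
qed

lemma smooth_jac:
  fixes \<Phi> :: "real^'n \<Rightarrow> real^'n"
  shows "(\<And>j. smooth_on W (\<lambda>x. \<Phi> x $ j)) \<Longrightarrow> smooth_on W (\<lambda>x. jac \<Phi> x $ r $ c)"
  by (simp add: jac_def smooth_on_partial)

lemma smooth_inverse:
  fixes \<Phi> \<Psi> :: "real^'n \<Rightarrow> real^'n"
  assumes V: "open V" and W: "open W" and PVW: "\<Psi> ` V \<subseteq> W"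
    and sPhi: "\<And>j. smooth_on W (\<lambda>x. \<Phi> x $ j)"
    and inv: "\<And>y. y \<in> V \<Longrightarrow> \<Phi> (\<Psi> y) = y"
    and dPsi: "\<And>y. y \<in> V \<Longrightarrow> \<Psi> differentiable (at y)"
    and nz: "\<And>x. x \<in> W \<Longrightarrow> det (jac \<Phi> x) \<noteq> 0"
  shows "smooth_on V (\<lambda>y. \<Psi> y $ k)"
proof -
  let ?G = "{(\<lambda>x. F (\<Psi> x)) | F. smooth_on W F}"
  define E where "E j i x = det (\<chi> r c. if c = j then axis i 1 $ r else jac \<Phi> x $ r $ c) * inverse (det (jac \<Phi> x))"
    for j i :: 'n and x
  have sE: "smooth_on W (E j i)" for j i
  proof -
    have "smooth_on W (\<lambda>x. det (\<chi> r c. if c = j then axis i 1 $ r else jac \<Phi> x $ r $ c))"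
    proof (rule smooth_det[OF W])
      fix r c
      show "smooth_on W (\<lambda>x. (\<chi> r c. if c = j then axis i 1 $ r else jac \<Phi> x $ r $ c) $ r $ c)"
        by (cases "c = j") (simp_all add: smooth_on_const smooth_jac[OF sPhi])
    qed
    moreover have "smooth_on W (\<lambda>x. inverse (det (jac \<Phi> x)))"
      by (rule smooth_inverse_fun[OF W smooth_det[OF W smooth_jac[OF sPhi]] nz])
    ultimately show ?thesis unfolding E_def by (rule smooth_mult[OF W])
  qed
  have key: "partial (\<lambda>y. \<Psi> y $ j) i y = E j i (\<Psi> y)" if yV: "y \<in> V" for i j y
  proof -
    obtain D where D: "(\<Psi> has_derivative D) (at y)" using dPsi[OF yV] unfolding differentiable_def by blast
    have "\<Phi> differentiable (at (\<Psi> y))"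
      using PVW yV smooth_on_diff[OF sPhi] by (intro vec_differentiable) blast
    then obtain DF where DF: "(\<Phi> has_derivative DF) (at (\<Psi> y))" unfolding differentiable_def by blast
    have c1: "((\<lambda>z. \<Phi> (\<Psi> z)) has_derivative (\<lambda>v. DF (D v))) (at y)" by (rule has_derivative_compose[OF D DF])
    have c2: "((\<lambda>z. \<Phi> (\<Psi> z)) has_derivative (\<lambda>v. v)) (at y)"
      by (rule has_derivative_transform_within_open[OF has_derivative_ident V yV]) (simp add: inv)
    have "(\<lambda>v. DF (D v)) = (\<lambda>v. v)" by (rule has_derivative_unique[OF c1 c2])
    then have Ax: "jac \<Phi> (\<Psi> y) *v D (axis i 1) = axis i 1"
      using deriv_jac[OF DF] by metis
    have "det (\<chi> r c. if c = j then axis i 1 $ r else jac \<Phi> (\<Psi> y) $ r $ c) = D (axis i 1) $ j * det (jac \<Phi> (\<Psi> y))"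
      using cramer_lemma[of j "jac \<Phi> (\<Psi> y)" "D (axis i 1)"] unfolding Ax .
    then have "E j i (\<Psi> y) = D (axis i 1) $ j"
      using nz[of "\<Psi> y"] PVW yV unfolding E_def by auto
    then show ?thesis using partial_at[OF nth_has_derivative[OF D]] by simp
  qed
  have "smooth_on V (\<lambda>y. (\<lambda>x. x $ k) (\<Psi> y))"
  proof (rule smooth_comp_gen[OF V W dPsi PVW _ smooth_coord])
    fix i j
    show "gen V ?G (partial (\<lambda>y. \<Psi> y $ j) i)"
    proof (rule gen_cong)
      show "gen V ?G (\<lambda>y. E j i (\<Psi> y))" using sE by (intro gen_G) blast
      show "\<forall>x\<in>V. E j i (\<Psi> x) = partial (\<lambda>y. \<Psi> y $ j) i x" using key by simp
    qed
  qed
  then show ?thesis by simp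
qed



lemma grad_inner:
  assumes D: "(f has_derivative Df) (at x)"
  shows "Df h = grad f x \<bullet> h"
proof -
  have "Df h = (\<Sum>j\<in>UNIV. h$j * Df (axis j 1))"
    by (rule linear_expand[OF has_derivative_linear[OF D]])
  also have "\<dots> = (\<Sum>j\<in>UNIV. grad f x $ j * h $ j)"
    using partial_at[OF D] by (simp add: grad_def mult.commute)
  finally show ?thesis by (simp add: inner_vec_def)
qed

lemma smooth_continuous:
  assumes "smooth_on UNIV f" shows "continuous_on UNIV f"
  using smooth_on_diff[OF assms]
  by (intro continuous_at_imp_continuous_on) (simp add: differentiable_imp_continuous_within)

lemma linear_algebra_setup:
  fixes v :: "nat \<Rightarrow> real^'n" and I :: "nat set"
  assumes finI: "finite I"
    and ind: "\<forall>a. (\<Sum>i\<in>I. a i *\<^sub>R v i) = 0 \<longrightarrow> (\<forall>i\<in>I. a i = 0)"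
    and card: "CARD('k) + card I = CARD('n)"
  obtains L :: "real^'k \<Rightarrow> real^'n" and R
  where "linear L" "linear R" "inj L" "\<And>u. R (L u) = u"
    "\<And>y. (\<forall>i\<in>I. v i \<bullet> y = 0) \<Longrightarrow> L (R y) = y"
    "\<And>u i. i \<in> I \<Longrightarrow> v i \<bullet> L u = 0"
proof -
  have inj_v: "inj_on v I"
  proof (rule inj_onI, rule ccontr)
    fix i j assume ij: "i \<in> I" "j \<in> I" "v i = v j" "i \<noteq> j"
    define a where "a l = (if l = i then 1 else 0) - (if l = j then (1::real) else 0)" for l
    have "(\<Sum>l\<in>I. a l *\<^sub>R v l) = (\<Sum>l\<in>I. (if l = i then v l else 0) - (if l = j then v l else 0))"
      by (rule sum.cong) (auto simp: a_def)
    also have "\<dots> = 0" using ij finI by (simp add: sum_subtractf)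
    finally have "a i = 0" using ind ij by blast
    then show False using ij unfolding a_def by simp
  qed
  have indep: "independent (v ` I)"
  proof
    assume "dependent (v ` I)"
    then obtain u where u: "\<exists>w\<in>v ` I. u w \<noteq> 0" "(\<Sum>w\<in>v ` I. u w *\<^sub>R w) = 0"
      using real_vector.dependent_finite[of "v ` I"] finI by blast
    have "(\<Sum>i\<in>I. u (v i) *\<^sub>R v i) = 0" using u(2) by (simp add: sum.reindex[OF inj_v])
    then have "\<forall>i\<in>I. u (v i) = 0" using ind[rule_format, of "\<lambda>i. u (v i)"] by blast
    then show False using u(1) by blast
  qed
  define T where "T = {y. \<forall>x\<in>span (v ` I). orthogonal x y}"
  have T_iff: "y \<in> T \<longleftrightarrow> (\<forall>i\<in>I. v i \<bullet> y = 0)" for y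
  proof
    assume "y \<in> T" then show "\<forall>i\<in>I. v i \<bullet> y = 0" unfolding T_def orthogonal_def by (auto intro: span_base)
  next
    assume h: "\<forall>i\<in>I. v i \<bullet> y = 0"
    have "orthogonal y x" if "x \<in> span (v ` I)" for x
      by (rule orthogonal_to_span[OF that]) (use h in \<open>auto simp: orthogonal_def inner_commute\<close>)
    then show "y \<in> T" unfolding T_def by (simp add: orthogonal_commute)
  qed
  have subT: "subspace T" unfolding T_def by (rule subspace_orthogonal_to_vectors)
  have "dim T + dim (span (v ` I)) = dim (UNIV :: (real^'n) set)"
    using dim_subspace_orthogonal_to_vectors[of "span (v ` I)" UNIV] unfolding T_def by simp
  moreover have "dim (span (v ` I)) = card I"
    using indep by (simp add: dim_span dim_eq_card_independent card_image[OF inj_v])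
  ultimately have dT: "dim (UNIV :: (real^'k) set) = dim T" using card by simp
  obtain L :: "real^'k \<Rightarrow> real^'n" and R where LR: "linear L" "linear R" "L ` UNIV = T" "R ` T = UNIV"
      "\<And>x. x \<in> UNIV \<Longrightarrow> norm (L x) = norm x" "\<And>x. x \<in> T \<Longrightarrow> norm (R x) = norm x"
      "\<And>x. x \<in> UNIV \<Longrightarrow> R (L x) = x" "\<And>y. y \<in> T \<Longrightarrow> L (R y) = y"
    by (rule isometries_subspaces[OF subspace_UNIV subT dT], rule that)
  have RL: "R (L u) = u" for u using LR(7) by simp
  have "inj L" by (metis RL injI)
  show ?thesis
  proof (rule that[OF LR(1,2) \<open>inj L\<close> RL])
    show "L (R y) = y" if "\<forall>i\<in>I. v i \<bullet> y = 0" for y using LR(8) T_iff that by blast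
    show "v i \<bullet> L u = 0" if "i \<in> I" for u i using LR(3) T_iff that by blast
  qed
qed

lemma span_perp_zero:
  fixes v :: "nat \<Rightarrow> real^'n"
  assumes "finite I" and ind: "\<forall>a. (\<Sum>i\<in>I. a i *\<^sub>R v i) = 0 \<longrightarrow> (\<forall>i\<in>I. a i = 0)"
    and perp: "\<forall>i\<in>I. v i \<bullet> (\<Sum>i\<in>I. a i *\<^sub>R v i) = 0"
  shows "\<forall>i\<in>I. a i = 0"
proof -
  let ?w = "\<Sum>i\<in>I. a i *\<^sub>R v i"
  have "?w \<bullet> ?w = (\<Sum>i\<in>I. a i * (v i \<bullet> ?w))" by (simp add: inner_sum_left)
  also have "\<dots> = 0" using perp by simp
  finally have "?w = 0" by simp
  then show ?thesis using ind by blast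
qed



lemma chart_exists:
  fixes g :: "nat \<Rightarrow> real^'n \<Rightarrow> real" and I :: "nat set" and p :: "real^'n"
  assumes finI: "finite I" and card: "CARD('k) + card I = CARD('n)"
    and sg: "\<forall>i\<in>I. smooth_on UNIV (g i)"
    and pY: "\<forall>i\<in>I. g i p = c i"
    and ind: "\<forall>a. (\<Sum>i\<in>I. a i *\<^sub>R grad (g i) p) = 0 \<longrightarrow> (\<forall>i\<in>I. a i = 0)"
  shows "\<exists>(\<phi>::real^'k \<Rightarrow> real^'n) U u. local_param \<phi> U {x. \<forall>i\<in>I. g i x = c i} \<and> u \<in> U \<and> \<phi> u = p"
proof -
  define Y where "Y = {x. \<forall>i\<in>I. g i x = c i}"
  define v where "v i = grad (g i) p" for i
  have indv: "\<forall>a. (\<Sum>i\<in>I. a i *\<^sub>R v i) = 0 \<longrightarrow> (\<forall>i\<in>I. a i = 0)" using ind by (simp add: v_def)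
  obtain L :: "real^'k \<Rightarrow> real^'n" and R where LR: "linear L" "linear R" "inj L" "\<And>u. R (L u) = u"
     "\<And>y. (\<forall>i\<in>I. v i \<bullet> y = 0) \<Longrightarrow> L (R y) = y" "\<And>u i. i\<in>I \<Longrightarrow> v i \<bullet> L u = 0"
    using linear_algebra_setup[OF finI indv card] by blast
  have bL: "bounded_linear L" "bounded_linear R" using LR(1,2) linear_conv_bounded_linear by auto
  have bLR: "bounded_linear (\<lambda>x. L (R x))" using bounded_linear_compose[OF bL] by (simp add: o_def)
  define \<Phi> where "\<Phi> x = (\<Sum>i\<in>I. (g i x - c i) *\<^sub>R v i) + L (R (x - p))" for x
  have dg: "\<And>i x. i\<in>I \<Longrightarrow> (g i has_derivative frechet_derivative (g i) (at x)) (at x)"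
    using sg smooth_on_diff frechet_derivative_works by blast
  define D\<Phi> where "D\<Phi> x h = (\<Sum>i\<in>I. frechet_derivative (g i) (at x) h *\<^sub>R v i) + L (R h)" for x h
  have dPhi: "(\<Phi> has_derivative D\<Phi> x) (at x)" for x
  proof -
    have 1: "((\<lambda>x. \<Sum>i\<in>I. (g i x - c i) *\<^sub>R v i) has_derivative (\<lambda>h. \<Sum>i\<in>I. frechet_derivative (g i) (at x) h *\<^sub>R v i)) (at x)"
    proof (rule has_derivative_sum)
      fix i assume "i \<in> I"
      have "((\<lambda>x. g i x - c i) has_derivative (\<lambda>h. frechet_derivative (g i) (at x) h - 0)) (at x)"
        by (rule has_derivative_diff[OF dg[OF \<open>i\<in>I\<close>] has_derivative_const])
      then show "((\<lambda>x. (g i x - c i) *\<^sub>R v i) has_derivative (\<lambda>h. frechet_derivative (g i) (at x) h *\<^sub>R v i)) (at x)"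
        using has_derivative_scaleR_left by fastforce
    qed
    have "((\<lambda>x. x - p) has_derivative (\<lambda>h. h - 0)) (at x)"
      by (rule has_derivative_diff[OF has_derivative_ident has_derivative_const])
    from bounded_linear.has_derivative[OF bLR this]
    have 2: "((\<lambda>x. L (R (x - p))) has_derivative (\<lambda>h. L (R h))) (at x)" by simp
    show ?thesis unfolding \<Phi>_def D\<Phi>_def using has_derivative_add[OF 1 2] .
  qed
  have blD: "bounded_linear (D\<Phi> x)" for x using dPhi has_derivative_bounded_linear by blast
  define f' where "f' x = Blinfun (D\<Phi> x)" for x
  have f'a: "blinfun_apply (f' x) = D\<Phi> x" for x unfolding f'_def using blD bounded_linear_Blinfun_apply by blast
  have contf: "continuous_on UNIV f'"
  proof (rule continuous_on_blinfun_componentwise)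
    fix b :: "real^'n" assume "b \<in> Basis"
    then obtain j where b: "b = axis j 1" by (auto simp: Basis_vec_def)
    have "frechet_derivative (g i) (at x) b = partial (g i) j x" for i x by (simp add: partial_def b)
    then have eq: "(\<lambda>x. f' x b) = (\<lambda>x. (\<Sum>i\<in>I. partial (g i) j x *\<^sub>R v i) + L (R b))" by (simp add: f'a D\<Phi>_def)
    have "continuous_on UNIV (\<lambda>x. partial (g i) j x)" if "i\<in>I" for i
      using smooth_continuous smooth_on_partial sg that by blast
    then show "continuous_on UNIV (\<lambda>x. f' x b)" unfolding eq by (intro continuous_intros) auto
  qed
  have Dp: "D\<Phi> p h = (\<Sum>i\<in>I. (v i \<bullet> h) *\<^sub>R v i) + L (R h)" for h
    unfolding D\<Phi>_def v_def using grad_inner[OF dg] by simp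
  have linD: "linear (D\<Phi> p)" using blD linear_conv_bounded_linear by blast
  have injD: "inj (D\<Phi> p)"
  proof -
    have "h = 0" if h0: "D\<Phi> p h = 0" for h
    proof -
      let ?w = "\<Sum>i\<in>I. (v i \<bullet> h) *\<^sub>R v i"
      have w: "?w = - L (R h)" using h0 unfolding Dp by (simp add: add_eq_0_iff)
      have "\<forall>i\<in>I. v i \<bullet> ?w = 0" unfolding w using LR(6) by simp
      then have "\<forall>i\<in>I. v i \<bullet> h = 0" using span_perp_zero[OF finI indv, of "\<lambda>i. v i \<bullet> h"] by blast
      then have "L (R h) = h" "?w = 0" using LR(5) by auto
      then show "h = 0" using w by simp
    qed
    then show ?thesis using linear_injective_0[OF linD] by blast
  qed
  obtain Dinv where Dinv: "linear Dinv" "Dinv \<circ> D\<Phi> p = id"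
    using linear_injective_left_inverse[OF linD injD] by blast
  have bDinv: "bounded_linear Dinv" using Dinv(1) linear_conv_bounded_linear by blast
  have invid: "Blinfun Dinv o\<^sub>L f' p = id_blinfun"
    by (rule blinfun_eqI) (use Dinv(2) in \<open>simp add: bounded_linear_Blinfun_apply[OF bDinv] f'a pointfree_idE\<close>)
  have derf: "(\<Phi> has_derivative blinfun_apply (f' x)) (at x)" if "x \<in> UNIV" for x
    using dPhi by (simp add: f'a)
  obtain U' V \<Psi> \<Psi>' where U': "open U'" "p \<in> U'" and V: "open V" "\<Phi> p \<in> V"
    and hom: "homeomorphism U' V \<Phi> \<Psi>"
    and dPsi: "\<And>y. y \<in> V \<Longrightarrow> (\<Psi> has_derivative \<Psi>' y) (at y)"
    and Psi': "\<And>y. y \<in> V \<Longrightarrow> \<Psi>' y = inv (D\<Phi> (\<Psi> y))"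
    and bij: "\<And>y. y \<in> V \<Longrightarrow> bij (D\<Phi> (\<Psi> y))"
    using inverse_function_theorem[OF open_UNIV derf contf UNIV_I invid] unfolding f'a by metis
  have PsiPhi: "\<And>x. x \<in> U' \<Longrightarrow> \<Psi> (\<Phi> x) = x" and PhiU': "\<Phi> ` U' = V"
    and PhiPsi: "\<And>y. y \<in> V \<Longrightarrow> \<Phi> (\<Psi> y) = y" and PsiV: "\<Psi> ` V = U'" and cPsi: "continuous_on V \<Psi>"
    using hom unfolding homeomorphism_def by auto
  have Phip: "\<Phi> p = 0" using pY LR(2,1) by (simp add: \<Phi>_def linear_0)
  have sPhi: "smooth_on U' (\<lambda>x. \<Phi> x $ j)" for j
  proof -
    have eq: "(\<lambda>x. \<Phi> x $ j) = (\<lambda>x. (\<Sum>i\<in>I. (g i x - c i) * v i $ j) + (L (R x) $ j - L (R p) $ j))"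
      by (rule ext) (simp add: \<Phi>_def linear_diff[OF LR(2)] linear_diff[OF LR(1)])
    have bl: "bounded_linear (\<lambda>x. L (R x) $ j)"
      using bounded_linear_compose[OF bounded_linear_vec_nth bLR] by (simp add: o_def)
    have "smooth_on UNIV (\<lambda>x. \<Phi> x $ j)" unfolding eq
      by (intro smooth_add smooth_sum smooth_mult smooth_diff smooth_on_const smooth_linear[OF bl]) (use sg finI in auto)
    then show ?thesis by (rule smooth_on_mono) simp
  qed
  have detnz: "det (jac \<Phi> x) \<noteq> 0" if "x \<in> U'" for x
  proof -
    have "\<Phi> x \<in> V" using PhiU' that by blast
    then have "bij (D\<Phi> x)" using bij PsiPhi that by metis
    moreover have "D\<Phi> x = (\<lambda>h. jac \<Phi> x *v h)" using deriv_jac[OF dPhi] by (rule ext)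
    ultimately have "inj (\<lambda>h. jac \<Phi> x *v h)" by (metis bij_is_inj)
    then show ?thesis using det_nz_iff_inj[of "\<lambda>h. jac \<Phi> x *v h"] by simp
  qed
  have sPsi: "smooth_on V (\<lambda>y. \<Psi> y $ k)" for k
    by (rule smooth_inverse[OF V(1) U'(1) _ sPhi PhiPsi _ detnz])
       (use PsiV dPsi differentiable_def in auto)
  define U where "U = L -` V"
  define \<phi> where "\<phi> u = \<Psi> (L u)" for u
  define \<psi> where "\<psi> x = R (x - p)" for x
  have openU: "open U" unfolding U_def
    by (rule continuous_open_vimage[OF V(1)]) (simp add: linear_continuous_at[OF bL(1)])
  have u0: "0 \<in> U" "\<phi> 0 = p" using Phip V(2) PsiPhi[OF U'(2)] LR(1) by (auto simp: U_def \<phi>_def linear_0)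
  have inY: "\<phi> u \<in> Y \<and> \<psi> (\<phi> u) = u" if "u \<in> U" for u
  proof -
    let ?x = "\<phi> u"
    have "\<Phi> ?x = L u" using that PhiPsi by (simp add: U_def \<phi>_def)
    then have w: "(\<Sum>i\<in>I. (g i ?x - c i) *\<^sub>R v i) = L (u - R (?x - p))"
      unfolding \<Phi>_def by (simp add: linear_diff[OF LR(1)] eq_diff_eq)
    have "\<forall>i\<in>I. v i \<bullet> (\<Sum>i\<in>I. (g i ?x - c i) *\<^sub>R v i) = 0" unfolding w using LR(6) by simp
    then have z: "\<forall>i\<in>I. g i ?x - c i = 0" using span_perp_zero[OF finI indv, of "\<lambda>i. g i ?x - c i"] by blast
    then have "L (u - R (?x - p)) = 0" using w by simp
    then have "u - R (?x - p) = 0" using linear_injective_0[OF LR(1)] LR(3) by blast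
    then have "u = R (?x - p)" by simp
    then show ?thesis using z by (simp add: Y_def \<psi>_def)
  qed
  have img: "\<phi> ` U = Y \<inter> U'"
  proof
    show "\<phi> ` U \<subseteq> Y \<inter> U'" using inY PsiV by (auto simp: U_def \<phi>_def)
    show "Y \<inter> U' \<subseteq> \<phi> ` U"
    proof
      fix x assume x: "x \<in> Y \<inter> U'"
      then have "\<Phi> x = L (R (x - p))" by (simp add: \<Phi>_def Y_def)
      moreover have "\<Phi> x \<in> V" using x PhiU' by blast
      ultimately have "R (x - p) \<in> U" "\<phi> (R (x - p)) = x"
        using PsiPhi[of x] x by (auto simp: U_def \<phi>_def)
      then show "x \<in> \<phi> ` U" by (metis image_eqI)
    qed
  qed
  have LUV: "L ` U \<subseteq> V" by (auto simp: U_def)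
  have lp: "local_param \<phi> U Y"
    unfolding local_param_def
  proof (intro conjI)
    show "open U" by (rule openU)
    show "\<forall>j. smooth_on U (\<lambda>u. \<phi> u $ j)"
    proof
      fix j
      have "smooth_on U (\<lambda>u. \<Psi> (L u) $ j)"
        by (rule smooth_comp[OF openU V(1) _ LUV sPsi])
           (rule smooth_linear, rule bounded_linear_compose[OF bounded_linear_vec_nth bL(1), unfolded o_def])
      then show "smooth_on U (\<lambda>u. \<phi> u $ j)" by (simp add: \<phi>_def)
    qed
    show "\<phi> ` U \<subseteq> Y" using img by blast
    show "openin (top_of_set Y) (\<phi> ` U)" unfolding img by (rule openin_open_Int[OF U'(1)])
    have cphi: "continuous_on U \<phi>" unfolding \<phi>_def
      by (rule continuous_on_compose2[OF cPsi linear_continuous_on[OF bL(1)] LUV])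
    have cpsi: "continuous_on (\<phi> ` U) \<psi>" unfolding \<psi>_def
      by (intro continuous_on_compose2[OF linear_continuous_on[OF bL(2)]] continuous_intros) auto
    have "homeomorphism U (\<phi> ` U) \<phi> \<psi>"
      unfolding homeomorphism_def using inY cphi cpsi by (auto simp: image_iff)
    then show "\<exists>\<psi>. homeomorphism U (\<phi> ` U) \<phi> \<psi>" by blast
    show "\<forall>u\<in>U. inj (frechet_derivative \<phi> (at u))"
    proof
      fix u assume u: "u \<in> U"
      then have Lu: "L u \<in> V" by (simp add: U_def)
      have "(\<phi> has_derivative (\<lambda>h. \<Psi>' (L u) (L h))) (at u)"
        unfolding \<phi>_def by (rule has_derivative_compose[OF bounded_linear_imp_has_derivative[OF bL(1)] dPsi[OF Lu]])
      then have fd: "frechet_derivative \<phi> (at u) = (\<lambda>h. \<Psi>' (L u) (L h))" using frechet_derivative_at by metis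
      have "inj (\<Psi>' (L u))" using Psi'[OF Lu] bij[OF Lu] bij_imp_bij_inv bij_is_inj by metis
      then show "inj (frechet_derivative \<phi> (at u))" unfolding fd using LR(3) by (simp add: inj_def)
    qed
  qed
  show ?thesis using lp u0 unfolding Y_def by blast
qed



lemma isolated_extremum:
  fixes \<phi> :: "real^'k \<Rightarrow> real^'n" and f :: "real^'n \<Rightarrow> real"
  assumes lp: "local_param \<phi> U Y" and u0: "u0 \<in> U" "\<phi> u0 = p"
    and sf: "smooth_on UNIV f"
    and morse: "morse_on TYPE('k) Y f"
    and ext: "(\<forall>y\<in>Y. f y \<le> f p) \<or> (\<forall>y\<in>Y. f p \<le> f y)"
  shows "\<exists>Q. open Q \<and> p \<in> Q \<and> (\<forall>x\<in>Q \<inter> Y. f x = f p \<longrightarrow> x = p)"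
proof -
  have openU: "open U" and sphi: "\<And>j. smooth_on U (\<lambda>u. \<phi> u $ j)" and phiY: "\<phi> ` U \<subseteq> Y"
    and opY: "openin (top_of_set Y) (\<phi> ` U)"
    using lp unfolding local_param_def by auto
  obtain \<psi> where hom: "homeomorphism U (\<phi> ` U) \<phi> \<psi>" using lp unfolding local_param_def by auto
  define h where "h = f \<circ> \<phi>"
  have sh: "smooth_on U h" unfolding h_def o_def
    by (rule smooth_comp[OF openU open_UNIV sphi _ sf]) simp
  have crit: "partial h j u = 0" and crit2: "frechet_derivative h (at u) = (\<lambda>_. 0)"
    if "u \<in> U" "f (\<phi> u) = f p" for u j
  proof -
    have D: "(h has_derivative frechet_derivative h (at u)) (at u)"
      using smooth_on_diff[OF sh that(1)] frechet_derivative_works by blast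
    have "(\<forall>w\<in>U. h w \<le> h u) \<or> (\<forall>w\<in>U. h u \<le> h w)"
      using ext phiY that by (auto simp: h_def)
    from differential_zero_maxmin[OF that(1) openU D this]
    show "frechet_derivative h (at u) = (\<lambda>_. 0)" .
    then show "partial h j u = 0" by (simp add: partial_def)
  qed
  have "frechet_derivative (f \<circ> \<phi>) (at u0) = (\<lambda>_. 0)" using crit2[OF u0(1)] u0(2) by (simp add: h_def)
  then have detH: "det (\<chi> i j. partial (\<lambda>v. partial h j v) i u0) \<noteq> 0"
    using morse lp u0(1) unfolding morse_on_def h_def by blast
  define H where "H = (\<chi> i j. partial (\<lambda>v. partial h j v) i u0)"
  define G where "G u = (\<chi> j. partial h j u)" for u
  have dG: "(G has_derivative (\<lambda>v. transpose H *v v)) (at u0)"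
  proof -
    have Dj: "((\<lambda>u. G u $ j) has_derivative frechet_derivative (partial h j) (at u0)) (at u0)" for j
      using smooth_on_diff[OF smooth_on_partial[OF sh] u0(1), of j] frechet_derivative_works[of "partial h j" "at u0"] by (simp add: G_def)
    have "frechet_derivative (partial h j) (at u0) v = (transpose H *v v) $ j" for j v
    proof -
      have "frechet_derivative (partial h j) (at u0) v = (\<Sum>i\<in>UNIV. v $ i * partial (partial h j) i u0)"
        using linear_expand[OF has_derivative_linear[OF Dj[of j]]] unfolding partial_def[of "partial h j"] .
      also have "\<dots> = (\<Sum>i\<in>UNIV. transpose H $ j $ i * v $ i)"
        by (rule sum.cong) (simp_all add: transpose_def H_def)
      finally show ?thesis by (simp only: matrix_vector_mult_def vec_lambda_beta)
    qed
    then have "(\<lambda>v. \<chi> j. frechet_derivative (partial h j) (at u0) v) = (\<lambda>v. transpose H *v v)"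
      by (simp add: vec_eq_iff)
    with vec_has_derivative[OF Dj] show ?thesis by simp
  qed
  have "det (transpose H) \<noteq> 0" using detH by (simp add: det_transpose H_def)
  then have "det (matrix (\<lambda>v. transpose H *v v)) \<noteq> 0" by (subst matrix_of_matrix_vector_mul)
  then have "inj (\<lambda>v. transpose H *v v)" using det_nz_iff_inj[OF matrix_vector_mul_linear] by blast
  then obtain B where B: "B > 0" "\<And>v. B * norm v \<le> norm (transpose H *v v)"
    using linear_inj_bounded_below_pos[OF matrix_vector_mul_linear, of "transpose H"] by blast
  have G0: "G u0 = 0" using crit[OF u0(1)] u0(2) by (simp add: G_def vec_eq_iff)
  have "\<forall>e>0. \<exists>d>0. \<forall>y. norm (y - u0) < d \<longrightarrow> norm (G y - G u0 - transpose H *v (y - u0)) \<le> e * norm (y - u0)"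
    using dG unfolding has_derivative_at_alt by blast
  then obtain d where d: "d > 0" "\<And>y. norm (y - u0) < d \<Longrightarrow> norm (G y - G u0 - transpose H *v (y - u0)) \<le> B/2 * norm (y - u0)"
    using B(1) by (metis half_gt_zero)
  have uniq: "u = u0" if "u \<in> U" "norm (u - u0) < d" "f (\<phi> u) = f p" for u
  proof (rule ccontr)
    assume "u \<noteq> u0"
    have "G u = 0" using crit[OF that(1,3)] by (simp add: G_def vec_eq_iff)
    then have "norm (transpose H *v (u - u0)) \<le> B/2 * norm (u - u0)" using d(2)[OF that(2)] G0 by simp
    moreover have "B * norm (u - u0) \<le> norm (transpose H *v (u - u0))" by (rule B(2))
    moreover have "norm (u - u0) > 0" using \<open>u \<noteq> u0\<close> by simp
    ultimately have "B * norm (u - u0) \<le> B/2 * norm (u - u0)" by linarith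
    then show False using B(1) \<open>norm (u - u0) > 0\<close> by (simp add: mult_le_cancel_right)
  qed
  have "openin (top_of_set U) (U \<inter> ball u0 d)" by (rule openin_open_Int) simp
  from homeomorphism_imp_open_map[OF hom this]
  have "openin (top_of_set Y) (\<phi> ` (U \<inter> ball u0 d))" using opY openin_trans by blast
  then obtain Q where Q: "open Q" "\<phi> ` (U \<inter> ball u0 d) = Y \<inter> Q" unfolding openin_open by blast
  show ?thesis
  proof (intro exI conjI ballI impI)
    show "open Q" by (rule Q(1))
    have "\<phi> u0 \<in> \<phi> ` (U \<inter> ball u0 d)" using u0(1) d(1) by simp
    then show "p \<in> Q" using Q(2) u0(2) by blast
    fix x assume x: "x \<in> Q \<inter> Y" "f x = f p"
    then have "x \<in> \<phi> ` (U \<inter> ball u0 d)" using Q(2) by blast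
    then obtain u where u: "u \<in> U" "u \<in> ball u0 d" "x = \<phi> u" by blast
    then have "norm (u - u0) < d" by (simp add: dist_norm norm_minus_commute)
    then show "x = p" using uniq[OF u(1)] x(2) u(3) u0(2) by blast
  qed
qed



lemma scf_discrete:
  fixes X :: "(real^'n) set"
  assumes disc: "\<forall>p\<in>X. \<exists>Q. open Q \<and> p \<in> Q \<and> Q \<inter> X \<subseteq> {p}"
  shows "scf_problem_solvable X"
  unfolding scf_problem_solvable_def
proof (intro allI impI)
  fix k :: nat assume k: "2 \<le> k"
  define F where "F x = (SOME q. q \<in> x ` {..<k})" for x :: "nat \<Rightarrow> real^'n"
  let ?P = "PiE {..<k} (\<lambda>_. X)"
  let ?T = "subtopology (product_topology (\<lambda>_. euclidean) {..<k}) ?P"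
  have topT: "topspace ?T = ?P" by (auto simp: PiE_iff)
  have FX: "F x \<in> X" if "x \<in> ?P" for x
  proof -
    have "x 0 \<in> x ` {..<k}" using k by auto
    then have "F x \<in> x ` {..<k}" unfolding F_def by (rule someI)
    then show ?thesis using that by (auto simp: PiE_iff)
  qed
  have single: "openin ?T {x}" if "x \<in> ?P" for x
  proof -
    have "\<forall>i. \<exists>Q. x i \<in> X \<longrightarrow> open Q \<and> x i \<in> Q \<and> Q \<inter> X \<subseteq> {x i}" using disc by blast
    then obtain Q where Q: "\<And>i. x i \<in> X \<Longrightarrow> open (Q i) \<and> x i \<in> Q i \<and> Q i \<inter> X \<subseteq> {x i}" by metis
    have xi: "x i \<in> X" if "i < k" for i using \<open>x \<in> ?P\<close> that by (auto simp: PiE_iff)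
    have op: "openin (product_topology (\<lambda>_. euclidean) {..<k}) (PiE {..<k} (\<lambda>i. Q i))"
      using Q xi by (simp add: openin_PiE_gen)
    have "PiE {..<k} (\<lambda>i. Q i) \<inter> ?P = {x}"
    proof
      show "{x} \<subseteq> PiE {..<k} (\<lambda>i. Q i) \<inter> ?P" using \<open>x \<in> ?P\<close> Q xi by (auto simp: PiE_iff)
      show "PiE {..<k} (\<lambda>i. Q i) \<inter> ?P \<subseteq> {x}"
      proof
        fix y assume y: "y \<in> PiE {..<k} (\<lambda>i. Q i) \<inter> ?P"
        have "y i = x i" for i
        proof (cases "i < k")
          case True
          then have "y i \<in> Q i \<inter> X" using y by (auto simp: PiE_iff)
          then show ?thesis using Q xi True by blast
        next
          case False
          then show ?thesis using y \<open>x \<in> ?P\<close> by (auto simp: PiE_iff extensional_def)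
        qed
        then show "y \<in> {x}" by auto
      qed
    qed
    then show ?thesis using op unfolding openin_subtopology by blast
  qed
  have allopen: "openin ?T S" if SP: "S \<subseteq> ?P" for S
  proof (subst openin_subopen, intro ballI)
    fix x assume "x \<in> S"
    then have "openin ?T {x}" using single SP by blast
    then show "\<exists>T. openin ?T T \<and> x \<in> T \<and> T \<subseteq> S" using \<open>x \<in> S\<close> by blast
  qed
  have cont: "continuous_map ?T (top_of_set X) F"
    unfolding continuous_map_def
  proof (intro conjI allI impI)
    show "F \<in> topspace ?T \<rightarrow> topspace (top_of_set X)" using FX by (simp only: topT) auto
    fix U assume "openin (top_of_set X) U"
    show "openin ?T {x \<in> topspace ?T. F x \<in> U}" using topT by (intro allopen) blast
  qed
  have anon: "\<forall>x\<in>?P. \<forall>\<sigma>. \<sigma> permutes {..<k} \<longrightarrow> F (x \<circ> \<sigma>) = F x"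
  proof (intro ballI allI impI)
    fix x :: "nat \<Rightarrow> real^'n" and \<sigma> :: "nat \<Rightarrow> nat" assume "\<sigma> permutes {..<k}"
    then have "(x \<circ> \<sigma>) ` {..<k} = x ` {..<k}" by (metis image_comp permutes_image)
    then show "F (x \<circ> \<sigma>) = F x" unfolding F_def by simp
  qed
  have unan: "\<forall>p\<in>X. F (\<lambda>i\<in>{..<k}. p) = p"
  proof
    fix p :: "real^'n"
    have "(\<lambda>i\<in>{..<k}. p) ` {..<k} = {p}" using k by (auto intro!: image_eqI[where x=0])
    then show "F (\<lambda>i\<in>{..<k}. p) = p" unfolding F_def by simp
  qed
  show "\<exists>F. social_choice_fun X k F"
    unfolding social_choice_fun_def using cont anon unan by blast
qed



theorem proposition11:
  fixes g :: "nat \<Rightarrow> real^'n::finite \<Rightarrow> real" and c :: "nat \<Rightarrow> real" and m :: nat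
    and Y X :: "(real^'n) set"
  assumes "2 \<le> m" and "m < CARD('n)"
    and "CARD('k::finite) = CARD('n) - (m - 1)"
    and "\<forall>i\<in>{1..m}. smooth_on UNIV (g i)"
    and "Y = {p. \<forall>i\<in>{1..m-1}. g i p = c i}"
    and "X = {p\<in>Y. g m p = c m}"
    and "Y \<noteq> {}" and "bounded Y" and "connected Y"
    and "\<forall>p\<in>Y. \<forall>a. (\<Sum>i=1..m-1. a i *\<^sub>R grad (g i) p) = 0 \<longrightarrow> (\<forall>i\<in>{1..m-1}. a i = 0)"
    and "morse_on TYPE('k) Y (g m)"
    and "((\<forall>p\<in>Y. g m p \<le> c m) \<and> (\<exists>q\<in>Y. g m q = c m))
       \<or> ((\<forall>p\<in>Y. c m \<le> g m p) \<and> (\<exists>q\<in>Y. g m q = c m))"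
  shows "scf_problem_solvable X"
proof (rule scf_discrete, intro ballI)
  fix p assume pX: "p \<in> X"
  then have pY: "p \<in> Y" and gp: "g m p = c m" using assms(6) by auto
  have card: "CARD('k) + card {1..m-1} = CARD('n)" using assms(2,3) by simp
  have sg: "\<forall>i\<in>{1..m-1}. smooth_on UNIV (g i)" using assms(4) by auto
  have pY': "\<forall>i\<in>{1..m-1}. g i p = c i" using pY assms(5) by auto
  have ind: "\<forall>a. (\<Sum>i\<in>{1..m-1}. a i *\<^sub>R grad (g i) p) = 0 \<longrightarrow> (\<forall>i\<in>{1..m-1}. a i = 0)"
    using assms(10) pY by blast
  obtain \<phi> :: "real^'k \<Rightarrow> real^'n" and U u0 where ch: "local_param \<phi> U Y" "u0 \<in> U" "\<phi> u0 = p"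
    using chart_exists[OF finite_atLeastAtMost card sg pY' ind] assms(5) by blast
  have sf: "smooth_on UNIV (g m)" using assms(1,4) by auto
  have ext: "(\<forall>y\<in>Y. g m y \<le> g m p) \<or> (\<forall>y\<in>Y. g m p \<le> g m y)" using assms(12) gp by auto
  obtain Q where Q: "open Q" "p \<in> Q" "\<forall>x\<in>Q \<inter> Y. g m x = g m p \<longrightarrow> x = p"
    using isolated_extremum[OF ch sf assms(11) ext] by blast
  have "Q \<inter> X \<subseteq> {p}" using Q(3) gp assms(6) by auto
  then show "\<exists>Q. open Q \<and> p \<in> Q \<and> Q \<inter> X \<subseteq> {p}" using Q(1,2) by blast
qed

end
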